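(* Fix a base $B>1$ and real numbers $a<b\le0$. Let $\mathfrak{B}_0$ be a fixed $m$-dimensional box and let $\mathfrak{B}_0\supset\mathfrak{B}_1\supset\cdots$ be a linear-fragmentation process whose proportion cuts $P_i^{(n)}$ are all identically distributed with $\log_B P_i^{(n)}$ uniform on $(a,b)$. Then the sequence of frame perimeters $\mathrm{Vol}_1(\mathfrak{B}_n)$ converges to strong Benford behavior in base $B$ as $n\to\infty$.
   Context: Significand: for $x>0$, $S_B(x)$ is the unique number in $[1,B)$ with $\log_B x-\log_B S_B(x)\in\mathbb{Z}$. A sequence of positive random variables $X^{(n)}$ converges to strong Benford behavior in base $B$ if $\mathbb{P}(S_B(X^{(n)})\le D)\to\log_B D$ for every $D\in[1,B]$. An $m$-dimensional box is a set $\prod_{i=1}^m[a_i,b_i]$ with finite $a_i<b_i$. For such a box $\mathfrak{B}$ and $1\le d\le m$, $\mathrm{Vol}_d(\mathfrak{B}):=2^{m-d}\sum_{|I|=d}\prod_{i\in I}(b_i-a_i)$, summing over $I\subset\{1,\dots,m\}$ with $|I|=d$; in particular $\mathrm{Vol}_1(\mathfrak{B})=2^{m-1}\sum_{i=1}^m(b_i-a_i)$. A linear-fragmentation process is a sequence of random $m$-dimensional boxes $\mathfrak{B}_0\supset\mathfrak{B}_1\supset\cdots$ where at each step $n\ge1$ independent proportion cuts $P_1^{(n)},\dots,P_m^{(n)}\in(0,1)$ are drawn (independent across $i$ and $n$) and the $i$-th side length of $\mathfrak{B}_{n-1}$ is multiplied by $P_i^{(n)}$ to give that of $\mathfrak{B}_n$.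 *)

theory Defs
  imports "HOL-Probability.Probability"
begin

definition significand :: "real \<Rightarrow> real \<Rightarrow> real" where
  "significand B x = (THE s. 1 \<le> s \<and> s < B \<and> log B x - log B s \<in> \<int>)"

definition strong_benford_conv :: "'a measure \<Rightarrow> real \<Rightarrow> (nat \<Rightarrow> 'a \<Rightarrow> real) \<Rightarrow> bool" where
  "strong_benford_conv M B X \<longleftrightarrow>
     (\<forall>D\<in>{1..B}. (\<lambda>n. measure M {\<omega>\<in>space M. significand B (X n \<omega>) \<le> D}) \<longlonglongrightarrow> log B D)"

text \<open>An m-dimensional box, represented by its lower and upper corners (coordinates 0..m-1).\<close>
type_synonym box = "(nat \<Rightarrow> real) \<times> (nat \<Rightarrow> real)"

definition is_box :: "nat \<Rightarrow> box \<Rightarrow> bool" where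
  "is_box m bx \<longleftrightarrow> (\<forall>i<m. fst bx i < snd bx i)"

definition box_set :: "nat \<Rightarrow> box \<Rightarrow> (nat \<Rightarrow> real) set" where
  "box_set m bx = {x. \<forall>i<m. fst bx i \<le> x i \<and> x i \<le> snd bx i}"

definition side_len :: "box \<Rightarrow> nat \<Rightarrow> real" where
  "side_len bx i = snd bx i - fst bx i"

definition Vol :: "nat \<Rightarrow> nat \<Rightarrow> box \<Rightarrow> real" where
  "Vol m d bx = 2 ^ (m - d) * (\<Sum>I\<in>{I. I \<subseteq> {0..<m} \<and> card I = d}. \<Prod>i\<in>I. side_len bx i)"

end

theory Submission
  imports Defs
begin


abbreviation SV :: "(nat \<Rightarrow> real) measure" where "SV \<equiv> PiM UNIV (\<lambda>_. borel)"

definition Op :: "real measure \<Rightarrow> nat \<Rightarrow> ((nat \<Rightarrow> real) \<Rightarrow> real) \<Rightarrow> (nat \<Rightarrow> real) \<Rightarrow> real" where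
  "Op \<nu> i g s = (\<integral>v. g (s(i := s i + v)) \<partial>\<nu>)"

definition bm :: "((nat \<Rightarrow> real) \<Rightarrow> real) \<Rightarrow> bool" where
  "bm g \<longleftrightarrow> g \<in> borel_measurable SV \<and> (\<exists>C. \<forall>s. \<bar>g s\<bar> \<le> C)"

definition fm :: "real measure \<Rightarrow> bool" where
  "fm \<nu> \<longleftrightarrow> prob_space \<nu> \<and> sets \<nu> = sets borel"

lemma space_SV[simp]: "space SV = UNIV"
  by (simp add: space_PiM)

lemma upd_meas_gen[measurable (raw)]:
  assumes [measurable]: "f \<in> measurable N SV" "h \<in> borel_measurable N"
  shows "(\<lambda>x. (f x)(i := f x i + h x)) \<in> measurable N SV"
  by (rule measurable_fun_upd[where J=UNIV]) auto

lemma upd_meas[measurable]: "(\<lambda>(s::nat\<Rightarrow>real, v::real). s(i := s i + v)) \<in> measurable (SV \<Otimes>\<^sub>M borel) SV"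
proof -
  have "(\<lambda>p::(nat\<Rightarrow>real)\<times>real. (fst p)(i := fst p i + snd p)) \<in> measurable (SV \<Otimes>\<^sub>M borel) SV"
    by measurable
  then show ?thesis by (simp add: case_prod_beta')
qed

lemma fm_measurable:
  assumes "fm \<nu>" shows "measurable \<nu> = measurable borel" "measurable (N \<Otimes>\<^sub>M \<nu>) = measurable (N \<Otimes>\<^sub>M borel)"
  using assms unfolding fm_def
  by (auto intro!: ext measurable_cong_sets sets_pair_measure_cong)

lemma bm_integrable:
  fixes f :: "_ \<Rightarrow> real" and C :: real
  assumes "finite_measure N" "f \<in> borel_measurable N" "\<And>x. \<bar>f x\<bar> \<le> C"
  shows "integrable N f"
  using assms by (intro finite_measure.integrable_const_bound[where B=C]) auto

lemma Op_bm:
  assumes "fm \<nu>" "bm g" shows "bm (Op \<nu> i g)"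
proof -
  from assms obtain C where C: "\<And>s. \<bar>g s\<bar> \<le> C" and gm[measurable]: "g \<in> borel_measurable SV"
    unfolding bm_def by auto
  have C0: "0 \<le> C" using C[of undefined] by simp
  interpret prob_space \<nu> using assms unfolding fm_def by auto
  have "(\<lambda>(s, v). g (s(i := s i + v))) \<in> borel_measurable (SV \<Otimes>\<^sub>M \<nu>)"
    unfolding fm_measurable(2)[OF assms(1)] by measurable
  then have m: "Op \<nu> i g \<in> borel_measurable SV"
    unfolding Op_def by (intro borel_measurable_lebesgue_integral) (simp add: case_prod_beta')
  have "\<bar>Op \<nu> i g s\<bar> \<le> C" for s
  proof -
    have "\<bar>Op \<nu> i g s\<bar> \<le> \<integral>v. \<bar>g (s(i := s i + v))\<bar> \<partial>\<nu>" unfolding Op_def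
      by (rule integral_abs_bound)
    also have "\<dots> \<le> \<integral>v. C \<partial>\<nu>"
      by (intro integral_mono bm_integrable[where C=C] finite_measure_axioms) (auto simp: C C0 fm_measurable[OF assms(1)])
    finally show ?thesis using C[of s] by (simp add: prob_space)
  qed
  with m show ?thesis unfolding bm_def by auto
qed

lemma upd_meas1[measurable]: "(\<lambda>v::real. s(i := s i + v)) \<in> measurable borel SV"
  by measurable

lemma Op_int:
  assumes "fm \<nu>" "bm g" shows "integrable \<nu> (\<lambda>v. g (s(i := s i + v)))"
proof -
  from assms obtain C where C: "\<And>s. \<bar>g s\<bar> \<le> C" and gm[measurable]: "g \<in> borel_measurable SV"
    unfolding bm_def by auto
  interpret prob_space \<nu> using assms unfolding fm_def by auto
  show ?thesis
    by (intro bm_integrable[where C=C] finite_measure_axioms) (auto simp: C fm_measurable[OF assms(1)])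
qed

lemma Op_mono:
  assumes "fm \<nu>" "bm f" "bm g" "\<And>s. f s \<le> g s" shows "Op \<nu> i f s \<le> Op \<nu> i g s"
  unfolding Op_def by (intro integral_mono Op_int assms)

lemma Op_const[simp]: "fm \<nu> \<Longrightarrow> Op \<nu> i (\<lambda>_. c) s = c"
  unfolding Op_def fm_def by (simp add: prob_space.prob_space)

lemma Op_add: "fm \<nu> \<Longrightarrow> bm f \<Longrightarrow> bm g \<Longrightarrow> Op \<nu> i (\<lambda>s. f s + g s) s = Op \<nu> i f s + Op \<nu> i g s"
  unfolding Op_def by (intro Bochner_Integration.integral_add Op_int)

lemma Op_diff: "fm \<nu> \<Longrightarrow> bm f \<Longrightarrow> bm g \<Longrightarrow> Op \<nu> i (\<lambda>s. f s - g s) s = Op \<nu> i f s - Op \<nu> i g s"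
  unfolding Op_def by (intro Bochner_Integration.integral_diff Op_int)

lemma Op_cmult: "Op \<nu> i (\<lambda>s. c * f s) s = c * Op \<nu> i f s"
  unfolding Op_def by simp

lemma bm_const[simp]: "bm (\<lambda>_. c)"
  unfolding bm_def by auto

lemma bm_add: "bm f \<Longrightarrow> bm g \<Longrightarrow> bm (\<lambda>s. f s + g s)"
  unfolding bm_def by (auto intro!: exI[of _ "_ + _"] abs_triangle_ineq[THEN order_trans] add_mono)

lemma bm_diff: "bm f \<Longrightarrow> bm g \<Longrightarrow> bm (\<lambda>s. f s - g s)"
  unfolding bm_def by (auto intro!: exI[of _ "_ + _"] abs_triangle_ineq4[THEN order_trans] add_mono)

lemma bm_cmult: "bm f \<Longrightarrow> bm (\<lambda>s. c * f s)"
  unfolding bm_def by (auto simp: abs_mult intro!: exI[of _ "\<bar>c\<bar> * _"] mult_left_mono)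

lemma Op_map:
  assumes "\<And>s v. \<sigma> (s(i := s i + v)) = (\<sigma> s)(i := \<sigma> s i + v)"
  shows "Op \<nu> i (\<lambda>s. g (\<sigma> s)) s = Op \<nu> i g (\<sigma> s)"
  unfolding Op_def assms ..

lemma Op_indep:
  assumes "fm \<nu>" "\<And>s v. g (s(i := v)) = g s" shows "Op \<nu> i g s = g s"
  using Op_const[OF assms(1), of i "g s" s] unfolding Op_def assms(2) .

lemma Op_comm:
  assumes "fm \<nu>" "fm \<mu>" "bm g" "i \<noteq> j"
  shows "Op \<nu> i (Op \<mu> j g) s = Op \<mu> j (Op \<nu> i g) s"
proof -
  from assms obtain C where C: "\<And>s. \<bar>g s\<bar> \<le> C" and gm[measurable]: "g \<in> borel_measurable SV"
    unfolding bm_def by auto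
  interpret N: prob_space \<nu> using assms unfolding fm_def by auto
  interpret M: prob_space \<mu> using assms unfolding fm_def by auto
  interpret P: pair_sigma_finite \<nu> \<mu> by unfold_locales
  interpret NM: prob_space "\<nu> \<Otimes>\<^sub>M \<mu>" by (rule prob_space_pair) unfold_locales
  have eq: "(s(j := s j + v))(i := (s(j := s j + v)) i + u) = (s(i := s i + u))(j := (s(i := s i + u)) j + v)" for u v
    using assms(4) by (auto simp: fun_eq_iff)
  have mm: "measurable (\<nu> \<Otimes>\<^sub>M \<mu>) = measurable (borel \<Otimes>\<^sub>M borel)"
    using assms(1,2) unfolding fm_def by (auto intro!: ext measurable_cong_sets sets_pair_measure_cong)
  have "(\<lambda>(u, v). g ((s(i := s i + u))(j := (s(i := s i + u)) j + v))) \<in> borel_measurable (borel \<Otimes>\<^sub>M borel)"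
    by measurable
  then have int: "integrable (\<nu> \<Otimes>\<^sub>M \<mu>) (\<lambda>(u, v). g ((s(i := s i + u))(j := (s(i := s i + u)) j + v)))"
    by (intro bm_integrable[where C=C] NM.finite_measure_axioms) (auto simp: C mm)
  have "Op \<nu> i (Op \<mu> j g) s = (\<integral>u. \<integral>v. g ((s(i := s i + u))(j := (s(i := s i + u)) j + v)) \<partial>\<mu> \<partial>\<nu>)"
    unfolding Op_def by simp
  also have "\<dots> = (\<integral>v. \<integral>u. g ((s(i := s i + u))(j := (s(i := s i + u)) j + v)) \<partial>\<nu> \<partial>\<mu>)"
    using P.Fubini_integral[OF int] by simp
  also have "\<dots> = Op \<mu> j (Op \<nu> i g) s"
    unfolding Op_def by (simp only: eq)
  finally show ?thesis .
qed



lemma unif_prob: "p < q \<Longrightarrow> prob_space (uniform_measure lborel {p..q::real})"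
  by (intro prob_space_uniform_measure) auto

lemma fm_unif: "p < q \<Longrightarrow> fm (uniform_measure lborel {p..q::real})"
  unfolding fm_def by (auto intro: unif_prob)

lemma unif_nn:
  fixes f :: "real \<Rightarrow> real"
  assumes pq: "p < q" and f[measurable]: "f \<in> borel_measurable borel" and f0: "\<And>x. 0 \<le> f x" and C: "\<And>x. f x \<le> C"
  shows "ennreal (\<integral>x. f x \<partial>uniform_measure lborel {p..q}) =
    ennreal (1/(q-p)) * (\<integral>\<^sup>+x. ennreal (f x) * indicator {p..q} x \<partial>lborel)"
proof -
  interpret prob_space "uniform_measure lborel {p..q}" using unif_prob[OF pq] .
  have "integrable (uniform_measure lborel {p..q}) f"
    by (intro bm_integrable[where C=C] finite_measure_axioms) (auto simp: f0 C abs_of_nonneg)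
  then have "ennreal (\<integral>x. f x \<partial>uniform_measure lborel {p..q}) = (\<integral>\<^sup>+x. ennreal (f x) \<partial>uniform_measure lborel {p..q})"
    by (subst nn_integral_eq_integral) (auto simp: f0)
  also have "\<dots> = (\<integral>\<^sup>+x. ennreal (f x) * indicator {p..q} x \<partial>lborel) / ennreal (q - p)"
    using pq by (subst nn_integral_uniform_measure) auto
  also have "\<dots> = ennreal (1/(q-p)) * (\<integral>\<^sup>+x. ennreal (f x) * indicator {p..q} x \<partial>lborel)"
    using pq by (simp add: divide_ennreal_def inverse_ennreal mult.commute inverse_eq_divide)
  finally show ?thesis .
qed

lemma overlap_bound:
  fixes a b al l x :: real
  assumes w: "a < b" and l: "l \<ge> b - a" and x: "al + a + (b-a)/4 \<le> x" "x \<le> al + l + b - (b-a)/4"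
  shows "ennreal ((b-a)/4) \<le> (\<integral>\<^sup>+y. indicator {a..b} (x - y) * indicator {al..al+l} y \<partial>lborel)"
proof -
  define p where "p = max (x-b) al"
  define q where "q = min (x-a) (al+l)"
  have pq: "q - p \<ge> (b-a)/4" unfolding p_def q_def 
  proof -
    have "(b-a)/4 \<le> (x-a) - (x-b)" "(b-a)/4 \<le> (x-a) - al" "(b-a)/4 \<le> (al+l) - (x-b)" "(b-a)/4 \<le> (al+l) - al"
      using assms by (auto simp: field_simps)
    then show "(b-a)/4 \<le> min (x - a) (al + l) - max (x - b) al" by (auto simp: min_def max_def)
  qed
  have "(\<integral>\<^sup>+y. indicator {a..b} (x - y) * indicator {al..al+l} y \<partial>lborel)
      = (\<integral>\<^sup>+y. indicator ({y. a \<le> x - y \<and> x - y \<le> b} \<inter> {al..al+l}) y \<partial>lborel)"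
    by (intro nn_integral_cong) (auto simp: indicator_def)
  also have "\<dots> = emeasure lborel ({y. a \<le> x - y \<and> x - y \<le> b} \<inter> {al..al+l})"
    by (intro nn_integral_indicator) measurable
  also have "\<dots> \<ge> emeasure lborel {p..q}"
    by (intro emeasure_mono) (auto simp: p_def q_def)
  finally have *: "emeasure lborel {p..q} \<le> (\<integral>\<^sup>+y. indicator {a..b} (x - y) * indicator {al..al+l} y \<partial>lborel)" .
  have "p \<le> q" using pq w by (auto simp: field_simps)
  then have "emeasure lborel {p..q} = ennreal (q - p)" by (simp add: emeasure_lborel_Icc)
  moreover have "ennreal ((b-a)/4) \<le> ennreal (q - p)" using pq by (intro ennreal_leI)
  ultimately show ?thesis using * by simp
qed

lemma conv1D:
  fixes \<psi> :: "real \<Rightarrow> real"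
  assumes w: "a < b" and l: "l \<ge> b - a" and \<psi>[measurable]: "\<psi> \<in> borel_measurable borel"
    and \<psi>0: "\<And>x. 0 \<le> \<psi> x" and C: "\<And>x. \<psi> x \<le> C"
  shows "(1/4) * (\<integral>x. \<psi> x \<partial>uniform_measure lborel {al+a+(b-a)/4 .. al+l+b-(b-a)/4})
    \<le> (\<integral>y. (\<integral>v. \<psi> (y+v) \<partial>uniform_measure lborel {a..b}) \<partial>uniform_measure lborel {al..al+l})"
proof -
  define w where "w = b - a"
  define p where "p = al+a+(b-a)/4"
  define q where "q = al+l+b-(b-a)/4"
  have w0: "w > 0" using w by (simp add: w_def)
  have l0: "l > 0" using w l by simp
  have qp: "q - p = l + w/2" by (simp add: p_def q_def w_def field_simps)
  have pq: "p < q" using qp l0 w0 by simp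
  define inner where "inner y = (\<integral>v. \<psi> (y+v) \<partial>uniform_measure lborel {a..b})" for y
  interpret Ua: prob_space "uniform_measure lborel {a..b}" using unif_prob[OF w] .
  have Ua1: "Ua.prob UNIV = 1" using Ua.prob_space by simp
  have C0: "0 \<le> C" using \<psi>0[of 0] C[of 0] by simp
  have int\<psi>: "integrable (uniform_measure lborel {a..b}) (\<lambda>v. \<psi> (y+v))" for y
    by (intro bm_integrable[where C=C] Ua.finite_measure_axioms) (auto simp: \<psi>0 C abs_of_nonneg)
  have inner0: "0 \<le> inner y" for y unfolding inner_def by (intro integral_nonneg_AE) (auto simp: \<psi>0)
  have innerC: "inner y \<le> C" for y
  proof -
    have "inner y \<le> (\<integral>v. C \<partial>uniform_measure lborel {a..b})" unfolding inner_def
      by (intro integral_mono int\<psi>) (auto simp: C)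
    then show ?thesis by (simp add: Ua1)
  qed
  have "(\<lambda>(y, v). \<psi> (y + v)) \<in> borel_measurable (borel \<Otimes>\<^sub>M uniform_measure lborel {a..b})"
  proof -
    have "measurable (borel \<Otimes>\<^sub>M uniform_measure lborel {a..b}) = measurable (borel \<Otimes>\<^sub>M borel)"
      by (intro ext measurable_cong_sets sets_pair_measure_cong) auto
    then show ?thesis by simp
  qed
  then have inner_m[measurable]: "inner \<in> borel_measurable borel"
    unfolding inner_def by (intro Ua.borel_measurable_lebesgue_integral) simp
  have inner_nn: "ennreal (inner y) = ennreal (1/w) * (\<integral>\<^sup>+x. ennreal (\<psi> x) * indicator {a..b} (x - y) \<partial>lborel)" for y
  proof -
    have "ennreal (inner y) = ennreal (1/w) * (\<integral>\<^sup>+v. ennreal (\<psi> (y+v)) * indicator {a..b} v \<partial>lborel)"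
      unfolding inner_def w_def by (rule unif_nn[OF w, where C=C]) (auto simp: \<psi>0 C)
    also have "(\<integral>\<^sup>+v. ennreal (\<psi> (y+v)) * indicator {a..b} v \<partial>lborel) = (\<integral>\<^sup>+x. ennreal (\<psi> x) * indicator {a..b} (x - y) \<partial>lborel)"
      using nn_integral_real_affine[of "\<lambda>x. ennreal (\<psi> x) * indicator {a..b} (x - y)" 1 y] by simp
    finally show ?thesis .
  qed
  define Z where "Z = (\<integral>\<^sup>+x. ennreal (\<psi> x) * indicator {p..q} x \<partial>lborel)"
  have e1: "ennreal (\<integral>y. inner y \<partial>uniform_measure lborel {al..al+l}) =
      ennreal (1/l) * (\<integral>\<^sup>+y. ennreal (inner y) * indicator {al..al+l} y \<partial>lborel)"
    using unif_nn[of al "al+l" inner C] l0 by (simp add: inner0 innerC)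
  have "(\<integral>\<^sup>+y. ennreal (inner y) * indicator {al..al+l} y \<partial>lborel) =
      (\<integral>\<^sup>+y. ennreal (1/w) * (\<integral>\<^sup>+x. ennreal (\<psi> x) * indicator {a..b} (x - y) * indicator {al..al+l} y \<partial>lborel) \<partial>lborel)"
  proof (intro nn_integral_cong)
    fix y
    have "(\<integral>\<^sup>+x. ennreal (\<psi> x) * indicator {a..b} (x - y) \<partial>lborel) * indicator {al..al+l} y =
      (\<integral>\<^sup>+x. ennreal (\<psi> x) * indicator {a..b} (x - y) * indicator {al..al+l} y \<partial>lborel)"
      by (rule nn_integral_multc[symmetric]) measurable
    then show "ennreal (inner y) * indicator {al..al+l} y = ennreal (1/w) * (\<integral>\<^sup>+x. ennreal (\<psi> x) * indicator {a..b} (x - y) * indicator {al..al+l} y \<partial>lborel)"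
      by (simp add: inner_nn mult.assoc)
  qed
  also have "\<dots> = ennreal (1/w) * (\<integral>\<^sup>+y. (\<integral>\<^sup>+x. ennreal (\<psi> x) * indicator {a..b} (x - y) * indicator {al..al+l} y \<partial>lborel) \<partial>lborel)"
    by (rule nn_integral_cmult) measurable
  finally have e2: "(\<integral>\<^sup>+y. ennreal (inner y) * indicator {al..al+l} y \<partial>lborel) = ennreal (1/w) * (\<integral>\<^sup>+y. (\<integral>\<^sup>+x. ennreal (\<psi> x) * indicator {a..b} (x - y) * indicator {al..al+l} y \<partial>lborel) \<partial>lborel)" .
  have "(\<integral>\<^sup>+y. (\<integral>\<^sup>+x. ennreal (\<psi> x) * indicator {a..b} (x - y) * indicator {al..al+l} y \<partial>lborel) \<partial>lborel)
      = (\<integral>\<^sup>+x. (\<integral>\<^sup>+y. ennreal (\<psi> x) * indicator {a..b} (x - y) * indicator {al..al+l} y \<partial>lborel) \<partial>lborel)"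
    by (rule lborel_pair.Fubini') measurable
  also have "\<dots> = (\<integral>\<^sup>+x. ennreal (\<psi> x) * (\<integral>\<^sup>+y. indicator {a..b} (x - y) * indicator {al..al+l} y \<partial>lborel) \<partial>lborel)"
    by (intro nn_integral_cong, subst nn_integral_cmult[symmetric]) (auto simp: mult.assoc)
  also have "\<dots> \<ge> (\<integral>\<^sup>+x. ennreal (\<psi> x) * (ennreal (w/4) * indicator {p..q} x) \<partial>lborel)"
  proof (intro nn_integral_mono mult_left_mono)
    fix x show "ennreal (w/4) * indicator {p..q} x \<le> (\<integral>\<^sup>+y. indicator {a..b} (x - y) * indicator {al..al+l} y \<partial>lborel)"
      using overlap_bound[OF w l, of al x] by (auto simp: indicator_def p_def q_def w_def)
  qed auto
  finally have e3: "(\<integral>\<^sup>+x. ennreal (\<psi> x) * (ennreal (w/4) * indicator {p..q} x) \<partial>lborel) \<le>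
    (\<integral>\<^sup>+y. (\<integral>\<^sup>+x. ennreal (\<psi> x) * indicator {a..b} (x - y) * indicator {al..al+l} y \<partial>lborel) \<partial>lborel)" .
  have e4: "(\<integral>\<^sup>+x. ennreal (\<psi> x) * (ennreal (w/4) * indicator {p..q} x) \<partial>lborel) = ennreal (w/4) * Z"
    unfolding Z_def by (subst nn_integral_cmult[symmetric]) (auto intro!: nn_integral_cong simp: mult_ac)
  have R: "ennreal (1/l) * (ennreal (1/w) * (ennreal (w/4) * Z)) \<le> ennreal (\<integral>y. inner y \<partial>uniform_measure lborel {al..al+l})"
    unfolding e1 e2 using e3 e4 by (auto intro!: mult_left_mono)
  have "ennreal (1/w) * ennreal (w/4) = ennreal (1/4)" using w0 by (simp flip: ennreal_mult)
  then have R': "ennreal (1/4) * (ennreal (1/l) * Z) \<le> ennreal (\<integral>y. inner y \<partial>uniform_measure lborel {al..al+l})"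
    using R by (simp add: mult_ac)
  have L: "ennreal ((1/4) * (\<integral>x. \<psi> x \<partial>uniform_measure lborel {p..q})) = ennreal (1/4) * (ennreal (1/(q-p)) * Z)"
    unfolding Z_def by (subst ennreal_mult) (auto intro!: integral_nonneg_AE simp: \<psi>0 unif_nn[OF pq, where C=C] C)
  have "ennreal (1/(q-p)) \<le> ennreal (1/l)" using qp l0 w0 by (intro ennreal_leI) (auto simp: field_simps)
  then have "ennreal ((1/4) * (\<integral>x. \<psi> x \<partial>uniform_measure lborel {p..q})) \<le> ennreal (\<integral>y. inner y \<partial>uniform_measure lborel {al..al+l})"
    unfolding L using R' by (meson order_trans mult_left_mono mult_right_mono zero_le)
  then show ?thesis
    unfolding p_def q_def inner_def
    by (subst (asm) ennreal_le_iff) (auto intro!: integral_nonneg_AE integral_nonneg_AE simp: \<psi>0)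
qed



lemma swap_int:
  fixes f :: "real \<Rightarrow> real \<Rightarrow> real"
  assumes "fm \<nu>" "fm \<mu>" and f[measurable]: "(\<lambda>(u,v). f u v) \<in> borel_measurable (borel \<Otimes>\<^sub>M borel)"
    and C: "\<And>u v. \<bar>f u v\<bar> \<le> C"
  shows "(\<integral>u. \<integral>v. f u v \<partial>\<mu> \<partial>\<nu>) = (\<integral>v. \<integral>u. f u v \<partial>\<nu> \<partial>\<mu>)"
proof -
  interpret N: prob_space \<nu> using assms unfolding fm_def by auto
  interpret M: prob_space \<mu> using assms unfolding fm_def by auto
  interpret P: pair_sigma_finite \<nu> \<mu> by unfold_locales
  interpret NM: prob_space "\<nu> \<Otimes>\<^sub>M \<mu>" by (rule prob_space_pair) unfold_locales
  have mm: "measurable (\<nu> \<Otimes>\<^sub>M \<mu>) = measurable (borel \<Otimes>\<^sub>M borel)"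
    using assms(1,2) unfolding fm_def by (auto intro!: ext measurable_cong_sets sets_pair_measure_cong)
  have int: "integrable (\<nu> \<Otimes>\<^sub>M \<mu>) (\<lambda>(u, v). f u v)"
    by (intro bm_integrable[where C=C] NM.finite_measure_axioms) (auto simp: C mm)
  show ?thesis using P.Fubini_integral[OF int] by simp
qed

lemma bm_upd: "bm F \<Longrightarrow> bm (\<lambda>s'. F (s'(j := s' j + t)))"
proof -
  assume "bm F"
  then obtain C where C: "\<And>s. \<bar>F s\<bar> \<le> C" and Fm: "F \<in> borel_measurable SV"
    unfolding bm_def by auto
  have "(\<lambda>s'::nat\<Rightarrow>real. s'(j := s' j + t)) \<in> measurable SV SV" by measurable
  then show ?thesis using C Fm unfolding bm_def by (auto intro: measurable_compose)
qed

lemma Op_sub: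
  fixes F :: "(nat \<Rightarrow> real) \<Rightarrow> real"
  assumes F: "bm F" "\<And>s. 0 \<le> F s" and t: "0 \<le> t" "t + 1 \<le> L"
  shows "(1/L) * Op (uniform_measure lborel {c..c+1}) j (\<lambda>s'. F (s'(j := s' j + t))) s
      \<le> Op (uniform_measure lborel {c..c+L}) j F s"
proof -
  from F obtain C where C: "\<And>s. \<bar>F s\<bar> \<le> C" and Fm[measurable]: "F \<in> borel_measurable SV"
    unfolding bm_def by auto
  define \<psi> where "\<psi> x = F (s(j := s j + x))" for x
  have \<psi>m[measurable]: "\<psi> \<in> borel_measurable borel" unfolding \<psi>_def by measurable
  have \<psi>0: "0 \<le> \<psi> x" for x unfolding \<psi>_def using F by simp
  have \<psi>C: "\<psi> x \<le> C" for x unfolding \<psi>_def using C[of "s(j := s j + x)"] by simp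
  have L0: "L > 0" using t by simp
  have l: "Op (uniform_measure lborel {c..c+1}) j (\<lambda>s'. F (s'(j := s' j + t))) s = (\<integral>y. \<psi> (t + y) \<partial>uniform_measure lborel {c..c+1})"
    unfolding Op_def \<psi>_def by (simp add: ac_simps)
  have r: "Op (uniform_measure lborel {c..c+L}) j F s = (\<integral>y. \<psi> y \<partial>uniform_measure lborel {c..c+L})"
    unfolding Op_def \<psi>_def ..
  have el: "ennreal (\<integral>y. \<psi> (t + y) \<partial>uniform_measure lborel {c..c+1}) = ennreal (1/1) * (\<integral>\<^sup>+x. ennreal (\<psi> (t + x)) * indicator {c..c+1} x \<partial>lborel)"
    using unif_nn[of c "c+1" "\<lambda>y. \<psi> (t + y)" C] by (simp add: \<psi>0 \<psi>C)
  have er: "ennreal (\<integral>y. \<psi> y \<partial>uniform_measure lborel {c..c+L}) = ennreal (1/L) * (\<integral>\<^sup>+x. ennreal (\<psi> x) * indicator {c..c+L} x \<partial>lborel)"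
    using unif_nn[of c "c+L" "\<psi>" C] L0 by (simp add: \<psi>0 \<psi>C)
  have "(\<integral>\<^sup>+x. ennreal (\<psi> (t + x)) * indicator {c..c+1} x \<partial>lborel) = (\<integral>\<^sup>+x. ennreal (\<psi> x) * indicator {c+t..c+t+1} x \<partial>lborel)"
    using nn_integral_real_affine[of "\<lambda>x. ennreal (\<psi> x) * indicator {c+t..c+t+1} x" 1 t]
    by (auto simp: indicator_def intro!: nn_integral_cong)
  also have "\<dots> \<le> (\<integral>\<^sup>+x. ennreal (\<psi> x) * indicator {c..c+L} x \<partial>lborel)"
    using t by (intro nn_integral_mono mult_left_mono) (auto simp: indicator_def)
  finally have "ennreal (1/L) * ennreal (\<integral>y. \<psi> (t + y) \<partial>uniform_measure lborel {c..c+1}) \<le> ennreal (\<integral>y. \<psi> y \<partial>uniform_measure lborel {c..c+L})"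
    unfolding el er by (auto intro!: mult_left_mono)
  then have "ennreal ((1/L) * (\<integral>y. \<psi> (t + y) \<partial>uniform_measure lborel {c..c+1})) \<le> ennreal (\<integral>y. \<psi> y \<partial>uniform_measure lborel {c..c+L})"
    using L0 by (subst ennreal_mult) (auto intro!: integral_nonneg_AE simp: \<psi>0)
  then show ?thesis unfolding l r
    by (subst (asm) ennreal_le_iff) (auto intro!: integral_nonneg_AE simp: \<psi>0)
qed

primrec chain :: "real measure \<Rightarrow> nat \<Rightarrow> ((nat \<Rightarrow> real) \<Rightarrow> real) \<Rightarrow> (nat \<Rightarrow> real) \<Rightarrow> real" where
  "chain \<nu> 0 g = g"
| "chain \<nu> (Suc j) g = Op \<nu> j (chain \<nu> j g)"

lemma chain_bm: "fm \<nu> \<Longrightarrow> bm g \<Longrightarrow> bm (chain \<nu> j g)"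
  by (induction j) (auto intro: Op_bm)

lemma Op_nonneg: "fm \<nu> \<Longrightarrow> (\<And>s. 0 \<le> g s) \<Longrightarrow> 0 \<le> Op \<nu> i g s"
  unfolding Op_def by (auto intro: integral_nonneg_AE)

lemma chain_nonneg: "fm \<nu> \<Longrightarrow> (\<And>s. 0 \<le> g s) \<Longrightarrow> 0 \<le> chain \<nu> j g s"
  by (induction j arbitrary: s) (auto intro!: Op_nonneg)

lemma chain_mono: "fm \<nu> \<Longrightarrow> bm f \<Longrightarrow> bm g \<Longrightarrow> (\<And>s. f s \<le> g s) \<Longrightarrow> chain \<nu> j f s \<le> chain \<nu> j g s"
  by (induction j arbitrary: s) (auto intro!: Op_mono chain_bm)

lemma chain_map:
  assumes "\<And>i s v. i < j \<Longrightarrow> \<sigma> (s(i := s i + v)) = (\<sigma> s)(i := \<sigma> s i + v)"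
  shows "chain \<nu> j (\<lambda>s. g (\<sigma> s)) s = chain \<nu> j g (\<sigma> s)"
  using assms
proof (induction j arbitrary: s)
  case (Suc j)
  have "chain \<nu> (Suc j) (\<lambda>s. g (\<sigma> s)) s = Op \<nu> j (\<lambda>s. chain \<nu> j g (\<sigma> s)) s"
    using Suc by (simp add: Op_def)
  also have "\<dots> = Op \<nu> j (chain \<nu> j g) (\<sigma> s)" by (rule Op_map) (rule Suc.prems, simp)
  finally show ?case by simp
qed simp

definition shl :: "nat \<Rightarrow> real \<Rightarrow> (nat \<Rightarrow> real) \<Rightarrow> nat \<Rightarrow> real" where
  "shl j t s = (\<lambda>i. if i < j then s i + t else s i)"

lemma chain_sub:
  assumes g: "bm g" "\<And>s. 0 \<le> g s" and t: "0 \<le> t" "t \<le> 1" and L: "2 \<le> L"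
  shows "(1/L)^j * chain (uniform_measure lborel {c..c+1}) j (\<lambda>s. g (shl j t s)) s
    \<le> chain (uniform_measure lborel {c..c+L}) j g s"
proof (induction j arbitrary: s)
  case 0 then show ?case by (simp add: shl_def)
next
  case (Suc j)
  let ?l = "uniform_measure lborel {c..c+1}" and ?L = "uniform_measure lborel {c..c+L}"
  have fl: "fm ?l" by (rule fm_unif) simp
  have fL: "fm ?L" by (rule fm_unif) (use L in simp)
  have L0: "0 < L" using L by simp
  have gs: "bm (\<lambda>s. g (shl j t s))"
  proof -
    have "(\<lambda>s. shl j t s) \<in> measurable SV SV" unfolding shl_def by (rule measurable_PiM_single') auto
    then show ?thesis using g unfolding bm_def by (auto intro: measurable_compose)
  qed
  define \<sigma> where "\<sigma> s' = s'(j := s' j + t)" for s' :: "nat \<Rightarrow> real"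
  have "(1/L)^(Suc j) * chain ?l (Suc j) (\<lambda>s. g (shl (Suc j) t s)) s
      = (1/L) * Op ?l j (\<lambda>s'. (1/L)^j * chain ?l j (\<lambda>s. g (shl j t s)) (\<sigma> s')) s"
  proof -
    have e: "shl j t (\<sigma> s') = shl (Suc j) t s'" for s' unfolding shl_def \<sigma>_def by (auto simp: fun_eq_iff less_Suc_eq)
    have cm: "\<sigma> (s(i := s i + v)) = (\<sigma> s)(i := \<sigma> s i + v)" if "i < j" for i s v
      using that unfolding \<sigma>_def by (auto simp: fun_eq_iff)
    have "chain ?l j (\<lambda>s. g (shl (Suc j) t s)) = (\<lambda>s'. chain ?l j (\<lambda>s. g (shl j t s)) (\<sigma> s'))"
      using chain_map[of j \<sigma> ?l "\<lambda>s. g (shl j t s)", OF cm] by (simp add: e fun_eq_iff)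
    then show ?thesis by (simp add: Op_cmult)
  qed
  also have "\<dots> \<le> (1/L) * Op ?l j (\<lambda>s'. chain ?L j g (\<sigma> s')) s"
    unfolding \<sigma>_def using L0
    by (intro mult_left_mono Op_mono fl bm_upd bm_cmult chain_bm gs fL g Suc.IH) auto
  also have "\<dots> \<le> Op ?L j (chain ?L j g) s"
    unfolding \<sigma>_def using L t by (intro Op_sub chain_bm chain_nonneg fL g) auto
  finally show ?case by simp
qed

locale ctx =
  fixes m :: nat and a b :: real
  assumes ab: "a < b"
begin

definition sh :: "real \<Rightarrow> (nat \<Rightarrow> real) \<Rightarrow> nat \<Rightarrow> real" where
  "sh t s = (\<lambda>i. if i < m then s i + t else s i)"

abbreviation T :: "real measure" where "T \<equiv> uniform_measure lborel {0..1}"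
abbreviation Uc :: "real measure" where "Uc \<equiv> uniform_measure lborel {a..b}"

lemma sh_upd: "sh t (s(i := s i + v)) = (sh t s)(i := sh t s i + v)"
  by (auto simp: sh_def fun_eq_iff)

lemma sh_meas[measurable]: "(\<lambda>(t, s). sh t s) \<in> measurable (borel \<Otimes>\<^sub>M SV) SV"
  unfolding sh_def
  by (rule measurable_PiM_single') (auto simp: case_prod_beta')

definition avg :: "((nat \<Rightarrow> real) \<Rightarrow> real) \<Rightarrow> real \<Rightarrow> bool" where
  "avg g A \<longleftrightarrow> (\<forall>s. (\<integral>t. g (sh t s) \<partial>T) = A)"

lemma fmT: "fm T" by (rule fm_unif) simp
lemma fmU: "fm Uc" by (rule fm_unif) (rule ab)

lemma avg_Op:
  assumes "fm \<nu>" "bm g" "avg g A" shows "avg (Op \<nu> i g) A"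
  unfolding avg_def
proof
  fix s
  from assms obtain C where C: "\<And>s. \<bar>g s\<bar> \<le> C" and gm[measurable]: "g \<in> borel_measurable SV"
    unfolding bm_def by auto
  have "(\<integral>t. Op \<nu> i g (sh t s) \<partial>T) = (\<integral>t. \<integral>v. g (sh t (s(i := s i + v))) \<partial>\<nu> \<partial>T)"
    unfolding Op_def sh_upd ..
  also have "\<dots> = (\<integral>v. \<integral>t. g (sh t (s(i := s i + v))) \<partial>T \<partial>\<nu>)"
  proof (rule swap_int[OF fmT assms(1), where C=C])
    have "(\<lambda>(t,v). (t, s(i := s i + v))) \<in> measurable (borel \<Otimes>\<^sub>M borel) (borel \<Otimes>\<^sub>M SV)"
      by measurable
    then show "(\<lambda>(u, v). g (sh u (s(i := s i + v)))) \<in> borel_measurable (borel \<Otimes>\<^sub>M borel)"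
      using measurable_comp[OF _ measurable_comp[OF sh_meas gm]] by (simp add: comp_def case_prod_beta')
  qed (simp add: C)
  also have "\<dots> = (\<integral>v. A \<partial>\<nu>)" using assms(3) unfolding avg_def by simp
  also have "\<dots> = A" using assms(1) unfolding fm_def by (simp add: prob_space.prob_space)
  finally show "(\<integral>t. Op \<nu> i g (sh t s) \<partial>T) = A" .
qed

end


lemma Op_affine: "fm \<nu> \<Longrightarrow> bm g \<Longrightarrow> Op \<nu> i (\<lambda>s. \<alpha> * g s + \<beta>) s = \<alpha> * Op \<nu> i g s + \<beta>"
  by (subst Op_add) (auto intro: bm_cmult simp: Op_cmult)

lemma funpow_bm: "fm \<nu> \<Longrightarrow> bm g \<Longrightarrow> bm ((Op \<nu> i ^^ n) g)"
  by (induction n) (auto intro: Op_bm)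

lemma funpow_affine: "fm \<nu> \<Longrightarrow> bm g \<Longrightarrow> (Op \<nu> i ^^ n) (\<lambda>s. \<alpha> * g s + \<beta>) s = \<alpha> * (Op \<nu> i ^^ n) g s + \<beta>"
proof (induction n arbitrary: s)
  case (Suc n)
  have "(Op \<nu> i ^^ Suc n) (\<lambda>s. \<alpha> * g s + \<beta>) s = Op \<nu> i (\<lambda>s. \<alpha> * (Op \<nu> i ^^ n) g s + \<beta>) s"
  proof -
    have "(Op \<nu> i ^^ n) (\<lambda>s. \<alpha> * g s + \<beta>) = (\<lambda>s. \<alpha> * (Op \<nu> i ^^ n) g s + \<beta>)"
      by (rule ext) (rule Suc.IH[OF Suc.prems])
    then show ?thesis by simp
  qed
  also have "\<dots> = \<alpha> * (Op \<nu> i ^^ Suc n) g s + \<beta>" using Suc by (simp add: Op_affine funpow_bm)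
  finally show ?case .
qed simp

lemma funpow_mono: "fm \<nu> \<Longrightarrow> bm f \<Longrightarrow> bm g \<Longrightarrow> (\<And>s. f s \<le> g s) \<Longrightarrow> (Op \<nu> i ^^ n) f s \<le> (Op \<nu> i ^^ n) g s"
  by (induction n arbitrary: s) (auto intro!: Op_mono funpow_bm)

lemma funpow_nonneg: "fm \<nu> \<Longrightarrow> bm g \<Longrightarrow> (\<And>s. 0 \<le> g s) \<Longrightarrow> 0 \<le> (Op \<nu> i ^^ n) g s"
  using funpow_mono[where f="\<lambda>_. 0" and g=g and \<nu>=\<nu> and i=i and n=n and s=s]
    funpow_affine[where g="\<lambda>_. 0" and \<alpha>=0 and \<beta>=0 and \<nu>=\<nu> and i=i and n=n and s=s] by simp

lemma funpow_bounds: "fm \<nu> \<Longrightarrow> bm g \<Longrightarrow> (\<And>s. lo \<le> g s \<and> g s \<le> hi) \<Longrightarrow> lo \<le> (Op \<nu> i ^^ n) g s \<and> (Op \<nu> i ^^ n) g s \<le> hi"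
  using funpow_mono[where f="\<lambda>_. lo" and g=g and \<nu>=\<nu> and i=i and n=n and s=s]
    funpow_mono[where g="\<lambda>_. hi" and f=g and \<nu>=\<nu> and i=i and n=n and s=s]
    funpow_affine[where g="\<lambda>_. 0" and \<alpha>=0 and \<beta>=lo and \<nu>=\<nu> and i=i and n=n and s=s]
    funpow_affine[where g="\<lambda>_. 0" and \<alpha>=0 and \<beta>=hi and \<nu>=\<nu> and i=i and n=n and s=s]
  by simp

context ctx begin

lemma chain_avg: "fm \<nu> \<Longrightarrow> bm g \<Longrightarrow> avg g A \<Longrightarrow> avg (chain \<nu> j g) A"
  by (induction j) (auto intro: avg_Op chain_bm)

lemma funpow_avg: "fm \<nu> \<Longrightarrow> bm g \<Longrightarrow> avg g A \<Longrightarrow> avg ((Op \<nu> i ^^ n) g) A"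
  by (induction n) (auto intro: avg_Op funpow_bm)

lemma sh_shl: "sh = shl m" unfolding sh_def shl_def by (simp add: fun_eq_iff)

lemma cube_bound:
  assumes g: "bm g" "\<And>s. 0 \<le> g s" "avg g A" and L: "2 \<le> L"
  shows "(1/L)^m * A \<le> chain (uniform_measure lborel {c..c+L}) m g s"
proof -
  let ?l = "uniform_measure lborel {c..c+1}" and ?L = "uniform_measure lborel {c..c+L}"
  have fl: "fm ?l" by (rule fm_unif) simp
  have fL: "fm ?L" by (rule fm_unif) (use L in simp)
  interpret TT: prob_space T using fmT unfolding fm_def by simp
  have T1: "TT.prob UNIV = 1" using TT.prob_space by simp
  have pt: "(1/L)^m * chain ?l m g (sh t s) \<le> chain ?L m g s" if "0 \<le> t" "t \<le> 1" for t
  proof -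
    have "chain ?l m (\<lambda>s. g (shl m t s)) s = chain ?l m g (sh t s)"
      unfolding sh_shl by (rule chain_map) (auto simp: shl_def fun_eq_iff)
    then show ?thesis using chain_sub[OF g(1,2) that L, where c=c and j=m and s=s] by simp
  qed
  obtain C where C: "\<And>s. \<bar>chain ?l m g s\<bar> \<le> C" and cm[measurable]: "chain ?l m g \<in> borel_measurable SV"
    using chain_bm[OF fl g(1), of m] unfolding bm_def by auto
  have "(\<lambda>t. (t, s)) \<in> measurable borel (borel \<Otimes>\<^sub>M SV)" by measurable
  then have shm: "(\<lambda>t. sh t s) \<in> measurable borel SV"
    using measurable_comp[OF _ sh_meas] by (simp add: comp_def)
  have int: "integrable T (\<lambda>t. (1/L)^m * chain ?l m g (sh t s))"
    by (intro integrable_mult_right bm_integrable[where C=C] TT.finite_measure_axioms)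
       (auto simp: C intro: measurable_compose[OF shm])
  have "(1/L)^m * A = (\<integral>t. (1/L)^m * chain ?l m g (sh t s) \<partial>T)"
    using chain_avg[OF fl g(1) g(3), of m] unfolding avg_def by simp
  also have "\<dots> \<le> (\<integral>t. chain ?L m g s \<partial>T)"
    by (intro integral_mono_AE int) (auto simp: AE_uniform_measure pt)
  also have "\<dots> = chain ?L m g s" by (simp add: T1)
  finally show ?thesis .
qed

lemma Op_conv:
  assumes F: "bm F" "\<And>s. 0 \<le> F s" and l: "l \<ge> b - a"
    and p: "p = al+a+(b-a)/4" and q: "q = al+l+b-(b-a)/4"
  shows "(1/4) * Op (uniform_measure lborel {p..q}) j F s \<le> Op (uniform_measure lborel {al..al+l}) j (Op Uc j F) s"
proof -
  from F obtain C where C: "\<And>s. \<bar>F s\<bar> \<le> C" and Fm[measurable]: "F \<in> borel_measurable SV"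
    unfolding bm_def by auto
  define \<psi> where "\<psi> x = F (s(j := s j + x))" for x
  have \<psi>m[measurable]: "\<psi> \<in> borel_measurable borel" unfolding \<psi>_def by measurable
  have \<psi>0: "0 \<le> \<psi> x" for x unfolding \<psi>_def using F by simp
  have \<psi>C: "\<psi> x \<le> C" for x unfolding \<psi>_def using C[of "s(j := s j + x)"] by simp
  have "Op (uniform_measure lborel {al..al+l}) j (Op Uc j F) s =
     (\<integral>y. (\<integral>v. \<psi> (y+v) \<partial>Uc) \<partial>uniform_measure lborel {al..al+l})"
    unfolding Op_def \<psi>_def by (simp add: ac_simps)
  moreover have "Op (uniform_measure lborel {p..q}) j F s = (\<integral>x. \<psi> x \<partial>uniform_measure lborel {p..q})"
    unfolding Op_def \<psi>_def ..
  ultimately show ?thesis using conv1D[OF ab l \<psi>m \<psi>0 \<psi>C, of al] p q by simp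
qed

definition Aa :: "nat \<Rightarrow> real" where "Aa k = a + real k * (a + (b-a)/4)"
definition Ll :: "nat \<Rightarrow> real" where "Ll k = (b - a) + real k * ((b-a)/2)"

lemma grow:
  assumes "bm F" "\<And>s. 0 \<le> F s"
  shows "(1/4)^k * Op (uniform_measure lborel {Aa k..Aa k + Ll k}) j F s \<le> (Op Uc j ^^ Suc k) F s"
  using assms
proof (induction k arbitrary: F s)
  case 0
  then show ?case by (simp add: Aa_def Ll_def)
next
  case (Suc k)
  have fU: "fm Uc" by (rule fmU)
  have "(1/4)^Suc k * Op (uniform_measure lborel {Aa (Suc k)..Aa (Suc k) + Ll (Suc k)}) j F s
      \<le> (1/4)^k * Op (uniform_measure lborel {Aa k..Aa k + Ll k}) j (Op Uc j F) s"
  proof -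
    have "(1/4) * Op (uniform_measure lborel {Aa (Suc k)..Aa (Suc k) + Ll (Suc k)}) j F s
      \<le> Op (uniform_measure lborel {Aa k..Aa k + Ll k}) j (Op Uc j F) s"
      by (rule Op_conv[OF Suc.prems]) (use ab in \<open>auto simp: Aa_def Ll_def field_simps intro: mult_right_mono\<close>)
    then show ?thesis by (simp add: mult.assoc mult_left_mono)
  qed
  also have "\<dots> \<le> (Op Uc j ^^ Suc k) (Op Uc j F) s"
    by (rule Suc.IH) (auto intro: Op_bm Op_nonneg fU Suc.prems)
  also have "\<dots> = (Op Uc j ^^ Suc (Suc k)) F s"
    by (simp only: funpow_Suc_right comp_def)
  finally show ?case .
qed

end


context ctx begin

primrec Wc :: "nat \<Rightarrow> nat \<Rightarrow> ((nat \<Rightarrow> real) \<Rightarrow> real) \<Rightarrow> (nat \<Rightarrow> real) \<Rightarrow> real" where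
  "Wc K 0 g = g"
| "Wc K (Suc j) g = (Op Uc j ^^ K) (Wc K j g)"

lemma Wc_bm: "bm g \<Longrightarrow> bm (Wc K j g)"
  by (induction j) (auto intro: funpow_bm fmU)

lemma Wc_avg: "bm g \<Longrightarrow> avg g A \<Longrightarrow> avg (Wc K j g) A"
  by (induction j) (auto intro: funpow_avg fmU Wc_bm)

lemma Wc_affine: "bm g \<Longrightarrow> Wc K j (\<lambda>s. \<alpha> * g s + \<beta>) s = \<alpha> * Wc K j g s + \<beta>"
proof (induction j arbitrary: s)
  case (Suc j)
  have "Wc K j (\<lambda>s. \<alpha> * g s + \<beta>) = (\<lambda>s. \<alpha> * Wc K j g s + \<beta>)"
    by (rule ext) (rule Suc.IH[OF Suc.prems])
  then show ?case using Suc.prems by (simp add: funpow_affine fmU Wc_bm)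
qed simp

lemma Wc_mono: "bm f \<Longrightarrow> bm g \<Longrightarrow> (\<And>s. f s \<le> g s) \<Longrightarrow> Wc K j f s \<le> Wc K j g s"
  by (induction j arbitrary: s) (auto intro!: funpow_mono fmU Wc_bm)

lemma Wc_bounds: "bm g \<Longrightarrow> (\<And>s. lo \<le> g s \<and> g s \<le> hi) \<Longrightarrow> lo \<le> Wc K j g s \<and> Wc K j g s \<le> hi"
  by (induction j arbitrary: s) (auto intro!: funpow_bounds[THEN conjunct1] funpow_bounds[THEN conjunct2] fmU Wc_bm)

lemma Wc_lower:
  assumes "bm g" "\<And>s. 0 \<le> g s"
  shows "((1/4)^k0)^j * chain (uniform_measure lborel {Aa k0..Aa k0 + Ll k0}) j g s \<le> Wc (Suc k0) j g s"
proof (induction j arbitrary: s)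
  case 0 then show ?case by simp
next
  case (Suc j)
  let ?L = "uniform_measure lborel {Aa k0..Aa k0 + Ll k0}"
  have "0 \<le> real k0 * ((b - a) / 2)" using ab by simp
  then have Lpos: "Aa k0 < Aa k0 + Ll k0" using ab unfolding Ll_def by linarith
  have fL: "fm ?L" by (rule fm_unif[OF Lpos])
  have "((1/4)^k0)^Suc j * chain ?L (Suc j) g s = ((1/4)^k0)^j * ((1/4)^k0 * Op ?L j (chain ?L j g) s)"
    by simp
  also have "\<dots> \<le> ((1/4)^k0)^j * (Op Uc j ^^ Suc k0) (chain ?L j g) s"
    by (intro mult_left_mono grow chain_bm chain_nonneg fL assms) auto
  also have "\<dots> = (Op Uc j ^^ Suc k0) (\<lambda>s. ((1/4)^k0)^j * chain ?L j g s + 0) s"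
    using funpow_affine[OF fmU chain_bm[OF fL assms(1), of j], where i=j and n="Suc k0" and \<alpha>="((1/4)^k0)^j" and \<beta>=0 and s=s]
    by simp
  also have "\<dots> \<le> (Op Uc j ^^ Suc k0) (Wc (Suc k0) j g) s"
    by (intro funpow_mono fmU bm_add bm_cmult chain_bm fL assms Wc_bm bm_const) (simp add: Suc.IH)
  finally show ?case by simp
qed

lemma avg_affine:
  assumes "bm g" "avg g A" shows "avg (\<lambda>s. \<alpha> * g s + \<beta>) (\<alpha> * A + \<beta>)"
  unfolding avg_def
proof
  fix s
  interpret TT: prob_space T using fmT unfolding fm_def by simp
  have T1: "TT.prob UNIV = 1" using TT.prob_space by simp
  obtain C where C: "\<And>s. \<bar>g s\<bar> \<le> C" and gm[measurable]: "g \<in> borel_measurable SV"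
    using assms unfolding bm_def by auto
  have "(\<lambda>t. (t, s)) \<in> measurable borel (borel \<Otimes>\<^sub>M SV)" by measurable
  then have shm: "(\<lambda>t. sh t s) \<in> measurable borel SV"
    using measurable_comp[OF _ sh_meas] by (simp add: comp_def)
  have int: "integrable T (\<lambda>t. g (sh t s))"
    by (intro bm_integrable[where C=C] TT.finite_measure_axioms) (auto simp: C intro: measurable_compose[OF shm])
  have "(\<integral>t. \<alpha> * g (sh t s) + \<beta> \<partial>T) = \<alpha> * (\<integral>t. g (sh t s) \<partial>T) + \<beta>"
    using int by (simp add: T1)
  then show "(\<integral>t. \<alpha> * g (sh t s) + \<beta> \<partial>T) = \<alpha> * A + \<beta>" using assms(2) unfolding avg_def by simp
qed

definition qq :: "nat \<Rightarrow> real" where "qq k0 = ((1/4)^k0)^m * (1/Ll k0)^m"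

lemma doeblin:
  assumes L: "2 \<le> Ll k0" and g: "bm g" "\<And>s. 0 \<le> g s" "avg g A"
  shows "qq k0 * A \<le> Wc (Suc k0) m g s"
proof -
  have "(1/Ll k0)^m * A \<le> chain (uniform_measure lborel {Aa k0..Aa k0 + Ll k0}) m g s"
    by (rule cube_bound[OF g L])
  then have "((1/4)^k0)^m * ((1/Ll k0)^m * A) \<le> ((1/4)^k0)^m * chain (uniform_measure lborel {Aa k0..Aa k0 + Ll k0}) m g s"
    by (intro mult_left_mono) auto
  also have "\<dots> \<le> Wc (Suc k0) m g s" by (rule Wc_lower[OF g(1,2)])
  finally show ?thesis by (simp add: qq_def mult.assoc)
qed

lemma contract:
  assumes L: "2 \<le> Ll k0" and g: "bm g" "avg g d" "\<And>s. lo \<le> g s \<and> g s \<le> hi"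
  shows "lo + qq k0 * (d - lo) \<le> Wc (Suc k0) m g s \<and> Wc (Suc k0) m g s \<le> hi - qq k0 * (hi - d)"
proof
  have g1: "bm (\<lambda>s. 1 * g s + (-lo))" by (intro bm_add bm_cmult g) simp
  have "qq k0 * (1 * d + (-lo)) \<le> Wc (Suc k0) m (\<lambda>s. 1 * g s + (-lo)) s"
    by (rule doeblin[OF L g1 _ avg_affine[OF g(1,2)]]) (simp add: g(3)[THEN conjunct1])
  then show "lo + qq k0 * (d - lo) \<le> Wc (Suc k0) m g s" using Wc_affine[OF g(1), of "Suc k0" m 1 "-lo" s] by simp
  have g2: "bm (\<lambda>s. (-1) * g s + hi)" by (intro bm_add bm_cmult g) simp
  have "qq k0 * ((-1) * d + hi) \<le> Wc (Suc k0) m (\<lambda>s. (-1) * g s + hi) s"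
    by (rule doeblin[OF L g2 _ avg_affine[OF g(1,2)]]) (simp add: g(3)[THEN conjunct2])
  then show "Wc (Suc k0) m g s \<le> hi - qq k0 * (hi - d)" using Wc_affine[OF g(1), of "Suc k0" m "-1" hi s] by simp
qed

lemma iter_bm: "bm g \<Longrightarrow> bm ((Wc K m ^^ j) g)"
  by (induction j) (auto intro: Wc_bm)

lemma iter_avg: "bm g \<Longrightarrow> avg g d \<Longrightarrow> avg ((Wc K m ^^ j) g) d"
  by (induction j) (auto intro: Wc_avg iter_bm)

lemma iterate:
  assumes L: "2 \<le> Ll k0" and g: "bm g" "avg g d" "\<And>s. lo \<le> g s \<and> g s \<le> hi"
  shows "d - (1 - qq k0)^j * (d - lo) \<le> (Wc (Suc k0) m ^^ j) g s \<and> (Wc (Suc k0) m ^^ j) g s \<le> d + (1 - qq k0)^j * (hi - d)"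
proof (induction j arbitrary: s)
  case 0 then show ?case using g(3)[of s] by simp
next
  case (Suc j)
  have "d - (1 - qq k0)^j * (d - lo) + qq k0 * (d - (d - (1 - qq k0)^j * (d - lo))) \<le> Wc (Suc k0) m ((Wc (Suc k0) m ^^ j) g) s \<and>
      Wc (Suc k0) m ((Wc (Suc k0) m ^^ j) g) s \<le> d + (1 - qq k0)^j * (hi - d) - qq k0 * (d + (1 - qq k0)^j * (hi - d) - d)"
    by (rule contract[OF L iter_bm[OF g(1)] iter_avg[OF g(1,2)]]) (use Suc.IH in auto)
  then show ?case by (simp add: algebra_simps)
qed

end


lemma unif_open_closed: "a < b \<Longrightarrow> uniform_measure lborel {a<..<b::real} = uniform_measure lborel {a..b}"
proof -
  assume ab: "a < b"
  have e: "emeasure lborel {a<..<b} = emeasure lborel {a..b}" using ab by simp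
  have "AE x in lborel. x \<noteq> a" "AE x in lborel. x \<noteq> b" by (rule AE_lborel_singleton)+
  then have "AE x in lborel. indicator {a<..<b} x / emeasure lborel {a<..<b} = (indicator {a..b} x / emeasure lborel {a..b} :: ennreal)"
    by eventually_elim (auto simp: e indicator_def)
  then show ?thesis unfolding uniform_measure_def by (intro density_cong) auto
qed

locale pctx = ctx m a b + prob_space M for m a b and M :: "'a measure" +
  fixes B :: real and P :: "nat \<Rightarrow> nat \<Rightarrow> 'a \<Rightarrow> real"
  assumes Pm: "\<And>i n. i < m \<Longrightarrow> n \<ge> 1 \<Longrightarrow> P i n \<in> borel_measurable M"
    and ind: "indep_vars (\<lambda>_. borel) (\<lambda>(i, n). P i n) ({0..<m} \<times> {1..})"
    and dist: "\<And>i n. i < m \<Longrightarrow> n \<ge> 1 \<Longrightarrow> distr M lborel (\<lambda>\<omega>. log B (P i n \<omega>)) = uniform_measure lborel {a<..<b}"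
begin

abbreviation Idx :: "(nat \<times> nat) set" where "Idx \<equiv> {0..<m} \<times> {1..}"

definition X :: "nat \<times> nat \<Rightarrow> 'a \<Rightarrow> real" where "X q \<omega> = log B (P (fst q) (snd q) \<omega>)"

definition vsum :: "(nat \<times> nat) set \<Rightarrow> 'a \<Rightarrow> nat \<Rightarrow> real" where
  "vsum S \<omega> = (\<lambda>i. \<Sum>q\<in>S. if fst q = i then X q \<omega> else 0)"

lemma X_meas[measurable]: "q \<in> Idx \<Longrightarrow> X q \<in> borel_measurable M"
  unfolding X_def using Pm[of "fst q" "snd q"] by (cases q) auto

lemma vsum_meas: "S \<subseteq> Idx \<Longrightarrow> vsum S \<in> measurable M SV"
  unfolding vsum_def
  by (rule measurable_PiM_single') (auto intro!: borel_measurable_sum X_meas)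

lemma X_dist: "q \<in> Idx \<Longrightarrow> distr M borel (X q) = Uc"
proof -
  assume q: "q \<in> Idx"
  have "distr M borel (X q) = distr M lborel (X q)" unfolding distr_def by simp
  also have "\<dots> = uniform_measure lborel {a<..<b}" unfolding X_def using dist[of "fst q" "snd q"] q by (cases q) auto
  also have "\<dots> = Uc" by (rule unif_open_closed[OF ab])
  finally show ?thesis .
qed

lemma indepY: "indep_vars (\<lambda>_. borel) X Idx"
proof -
  have "indep_vars (\<lambda>_. borel) (\<lambda>q x. log B ((case q of (i, n) \<Rightarrow> P i n) x)) Idx"
    by (rule indep_vars_compose2[OF ind]) auto
  then show ?thesis unfolding X_def by (simp add: case_prod_beta')
qed

lemma indep_pair:
  assumes S: "S \<subseteq> Idx" "finite S" and p: "p \<in> Idx" "p \<notin> S"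
  shows "indep_var SV (vsum S) SV (\<lambda>\<omega> i. X p \<omega>)"
proof -
  define K where "K = case_bool S {p}"
  have I: "indep_vars (\<lambda>j. PiM (K j) (\<lambda>_. borel)) (\<lambda>j \<omega>. restrict (\<lambda>q. X q \<omega>) (K j)) UNIV"
    by (rule indep_vars_restrict[OF indepY]) (use S p in \<open>auto simp: K_def disjoint_family_on_def split: bool.splits\<close>)
  have e1: "(\<lambda>j. PiM (K j) (\<lambda>_. borel)) = case_bool (PiM S (\<lambda>_. borel)) (PiM {p} (\<lambda>_. borel))"
    by (auto simp: K_def fun_eq_iff split: bool.split)
  have e2: "(\<lambda>j \<omega>. restrict (\<lambda>q. X q \<omega>) (K j)) = case_bool (\<lambda>\<omega>. restrict (\<lambda>q. X q \<omega>) S) (\<lambda>\<omega>. restrict (\<lambda>q. X q \<omega>) {p})"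
    by (auto simp: K_def fun_eq_iff split: bool.split)
  have "indep_var (PiM S (\<lambda>_. borel)) (\<lambda>\<omega>. restrict (\<lambda>q. X q \<omega>) S) (PiM {p} (\<lambda>_. borel)) (\<lambda>\<omega>. restrict (\<lambda>q. X q \<omega>) {p})"
    unfolding indep_var_def using I by (simp only: e1 e2)
  then have "indep_var SV ((\<lambda>x. \<lambda>i. \<Sum>q\<in>S. if fst q = i then x q else 0) \<circ> (\<lambda>\<omega>. restrict (\<lambda>q. X q \<omega>) S)) SV ((\<lambda>x i. x p) \<circ> (\<lambda>\<omega>. restrict (\<lambda>q. X q \<omega>) {p}))"
    by (rule indep_var_compose) (auto intro!: measurable_PiM_single' borel_measurable_sum)
  moreover have "vsum S = ((\<lambda>x. \<lambda>i. \<Sum>q\<in>S. if fst q = i then x q else 0) \<circ> (\<lambda>\<omega>. restrict (\<lambda>q. X q \<omega>) S))"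
    unfolding vsum_def by (auto simp: fun_eq_iff intro!: sum.cong)
  moreover have "(\<lambda>\<omega> i. X p \<omega>) = ((\<lambda>x i. x p) \<circ> (\<lambda>\<omega>. restrict (\<lambda>q. X q \<omega>) {p}))"
    by (auto simp: fun_eq_iff)
  ultimately show ?thesis by (metis (no_types))
qed

lemma vsum_insert: "finite S \<Longrightarrow> p \<notin> S \<Longrightarrow> vsum (insert p S) \<omega> = (vsum S \<omega>)(fst p := vsum S \<omega> (fst p) + X p \<omega>)"
  unfolding vsum_def by (auto simp: fun_eq_iff)

lemma link:
  assumes S: "S \<subseteq> Idx" "finite S" and p: "p \<in> Idx" "p \<notin> S" and g: "bm g"
  shows "(\<integral>\<omega>. g (vsum (insert p S) \<omega>) \<partial>M) = (\<integral>\<omega>. Op Uc (fst p) g (vsum S \<omega>) \<partial>M)"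
proof -
  define i where "i = fst p"
  obtain C where C: "\<And>s. \<bar>g s\<bar> \<le> C" and gm[measurable]: "g \<in> borel_measurable SV"
    using g unfolding bm_def by auto
  have vm[measurable]: "vsum S \<in> measurable M SV" by (rule vsum_meas[OF S(1)])
  have Xm[measurable]: "X p \<in> borel_measurable M" by (rule X_meas[OF p(1)])
  have Vm[measurable]: "(\<lambda>\<omega> (j::nat). X p \<omega>) \<in> measurable M SV" by (rule measurable_PiM_single') auto
  define g' where "g' = (\<lambda>(z::nat\<Rightarrow>real, v::nat\<Rightarrow>real). g (z(i := z i + v 0)))"
  have g'm[measurable]: "g' \<in> borel_measurable (SV \<Otimes>\<^sub>M SV)"
  proof -
    have "(\<lambda>x::(nat\<Rightarrow>real)\<times>(nat\<Rightarrow>real). (fst x)(i := fst x i + snd x 0)) \<in> measurable (SV \<Otimes>\<^sub>M SV) SV"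
      by measurable
    then show ?thesis unfolding g'_def by (simp add: case_prod_beta')
  qed
  have g'C: "\<bar>g' x\<bar> \<le> C" for x unfolding g'_def by (auto simp: C split: prod.split)
  interpret D1: prob_space "distr M SV (vsum S)" by (rule prob_space_distr) simp
  interpret D2: prob_space "distr M SV (\<lambda>\<omega> j. X p \<omega>)" by (rule prob_space_distr) simp
  interpret D12: pair_prob_space "distr M SV (vsum S)" "distr M SV (\<lambda>\<omega> j. X p \<omega>)" by unfold_locales
  have eq: "distr M SV (vsum S) \<Otimes>\<^sub>M distr M SV (\<lambda>\<omega> j. X p \<omega>) = distr M (SV \<Otimes>\<^sub>M SV) (\<lambda>\<omega>. (vsum S \<omega>, \<lambda>j. X p \<omega>))"
    using indep_pair[OF S p] unfolding indep_var_distribution_eq by simp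
  have "(\<integral>\<omega>. g (vsum (insert p S) \<omega>) \<partial>M) = (\<integral>\<omega>. g' (vsum S \<omega>, \<lambda>j. X p \<omega>) \<partial>M)"
    by (simp add: vsum_insert[OF S(2) p(2)] g'_def i_def)
  also have "\<dots> = (\<integral>x. g' x \<partial>distr M (SV \<Otimes>\<^sub>M SV) (\<lambda>\<omega>. (vsum S \<omega>, \<lambda>j. X p \<omega>)))"
    by (rule integral_distr[symmetric]) auto
  also have "\<dots> = (\<integral>x. g' x \<partial>(distr M SV (vsum S) \<Otimes>\<^sub>M distr M SV (\<lambda>\<omega> j. X p \<omega>)))"
    unfolding eq ..
  also have "\<dots> = (\<integral>z. \<integral>v. g' (z, v) \<partial>distr M SV (\<lambda>\<omega> j. X p \<omega>) \<partial>distr M SV (vsum S))"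
    by (rule D12.integral_fst'[symmetric], intro bm_integrable[where C=C] D12.finite_measure_axioms) (auto simp: g'C)
  also have "\<dots> = (\<integral>z. Op Uc i g z \<partial>distr M SV (vsum S))"
  proof (intro Bochner_Integration.integral_cong refl)
    fix z
    have "(\<integral>v. g' (z, v) \<partial>distr M SV (\<lambda>\<omega> j. X p \<omega>)) = (\<integral>\<omega>. g (z(i := z i + X p \<omega>)) \<partial>M)"
      unfolding g'_def by (subst integral_distr) auto
    also have "\<dots> = (\<integral>x. g (z(i := z i + x)) \<partial>distr M borel (X p))"
      by (rule integral_distr[symmetric]) auto
    also have "\<dots> = Op Uc i g z" unfolding Op_def X_dist[OF p(1)] ..
    finally show "(\<integral>v. g' (z, v) \<partial>distr M SV (\<lambda>\<omega> j. X p \<omega>)) = Op Uc i g z" .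
  qed
  also have "\<dots> = (\<integral>\<omega>. Op Uc i g (vsum S \<omega>) \<partial>M)"
    using Op_bm[OF fmU g, of i] unfolding bm_def by (subst integral_distr) auto
  finally show ?thesis unfolding i_def .
qed

lemma link_row:
  assumes S: "S \<subseteq> Idx" "finite S" and i: "i < m" and disj: "\<And>k. k \<in> {c+1..c+r} \<Longrightarrow> (i, k) \<notin> S" and g: "bm g"
  shows "(\<integral>\<omega>. g (vsum (S \<union> {i} \<times> {c+1..c+r}) \<omega>) \<partial>M) = (\<integral>\<omega>. (Op Uc i ^^ r) g (vsum S \<omega>) \<partial>M)"
  using disj g
proof (induction r arbitrary: g)
  case 0 then show ?case by simp
next
  case (Suc r)
  have e: "S \<union> {i} \<times> {c+1..c+Suc r} = insert (i, c + Suc r) (S \<union> {i} \<times> {c+1..c+r})" by auto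
  have "(\<integral>\<omega>. g (vsum (S \<union> {i} \<times> {c+1..c+Suc r}) \<omega>) \<partial>M) = (\<integral>\<omega>. Op Uc i g (vsum (S \<union> {i} \<times> {c+1..c+r}) \<omega>) \<partial>M)"
    unfolding e using S i Suc.prems by (subst link) auto
  also have "\<dots> = (\<integral>\<omega>. (Op Uc i ^^ r) (Op Uc i g) (vsum S \<omega>) \<partial>M)"
    by (rule Suc.IH) (use Suc.prems in \<open>auto intro: Op_bm fmU\<close>)
  also have "\<dots> = (\<integral>\<omega>. (Op Uc i ^^ Suc r) g (vsum S \<omega>) \<partial>M)"
    by (simp only: funpow_Suc_right comp_def)
  finally show ?case .
qed

lemma link_block:
  assumes S: "S \<subseteq> Idx" "finite S" and j: "j \<le> m" and disj: "S \<inter> {0..<j} \<times> {c+1..c+K} = {}" and g: "bm g"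
  shows "(\<integral>\<omega>. g (vsum (S \<union> {0..<j} \<times> {c+1..c+K}) \<omega>) \<partial>M) = (\<integral>\<omega>. Wc K j g (vsum S \<omega>) \<partial>M)"
  using S j disj
proof (induction j arbitrary: S)
  case 0 then show ?case by simp
next
  case (Suc j)
  have e: "S \<union> {0..<Suc j} \<times> {c+1..c+K} = (S \<union> {j} \<times> {c+1..c+K}) \<union> {0..<j} \<times> {c+1..c+K}" by auto
  have "(\<integral>\<omega>. g (vsum (S \<union> {0..<Suc j} \<times> {c+1..c+K}) \<omega>) \<partial>M) = (\<integral>\<omega>. Wc K j g (vsum (S \<union> {j} \<times> {c+1..c+K}) \<omega>) \<partial>M)"
    unfolding e by (rule Suc.IH) (use Suc.prems in auto)
  also have "\<dots> = (\<integral>\<omega>. (Op Uc j ^^ K) (Wc K j g) (vsum S \<omega>) \<partial>M)"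
    by (rule link_row) (use Suc.prems g in \<open>auto intro: Wc_bm\<close>)
  finally show ?case by simp
qed

lemma link_full_blocks:
  assumes g: "bm g"
  shows "(\<integral>\<omega>. g (vsum ({0..<m} \<times> {1..j*K}) \<omega>) \<partial>M) = (Wc K m ^^ j) g (\<lambda>_. 0)"
  using g
proof (induction j arbitrary: g)
  case 0
  then show ?case by (simp add: vsum_def prob_space)
next
  case (Suc j)
  have e: "{0..<m} \<times> {1..Suc j*K} = {0..<m} \<times> {1..j*K} \<union> {0..<m} \<times> {j*K+1..j*K+K}" by auto
  have "(\<integral>\<omega>. g (vsum ({0..<m} \<times> {1..Suc j*K}) \<omega>) \<partial>M) = (\<integral>\<omega>. Wc K m g (vsum ({0..<m} \<times> {1..j*K}) \<omega>) \<partial>M)"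
    unfolding e by (rule link_block) (use Suc.prems in auto)
  also have "\<dots> = (Wc K m ^^ j) (Wc K m g) (\<lambda>_. 0)"
    by (rule Suc.IH) (use Suc.prems in \<open>auto intro: Wc_bm\<close>)
  finally show ?case by (simp only: funpow_Suc_right comp_def)
qed

lemma link_full:
  assumes g: "bm g" and K: "K > 0"
  shows "(\<integral>\<omega>. g (vsum ({0..<m} \<times> {1..n}) \<omega>) \<partial>M) = (Wc K m ^^ (n div K)) (Wc (n mod K) m g) (\<lambda>_. 0)"
proof -
  have e: "{0..<m} \<times> {1..n} = {0..<m} \<times> {1..(n div K)*K} \<union> {0..<m} \<times> {(n div K)*K+1..(n div K)*K + n mod K}"
  proof -
    define N where "N = n div K * K"
    have "N + n mod K = n" unfolding N_def by simp
    then have "{0..<m} \<times> {1..n} = {0..<m} \<times> {1..N} \<union> {0..<m} \<times> {N+1..N + n mod K}" by auto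
    then show ?thesis unfolding N_def .
  qed
  have "(\<integral>\<omega>. g (vsum ({0..<m} \<times> {1..n}) \<omega>) \<partial>M) = (\<integral>\<omega>. Wc (n mod K) m g (vsum ({0..<m} \<times> {1..(n div K)*K}) \<omega>) \<partial>M)"
    unfolding e by (rule link_block) (use g in auto)
  also have "\<dots> = (Wc K m ^^ (n div K)) (Wc (n mod K) m g) (\<lambda>_. 0)"
    by (rule link_full_blocks) (use g in \<open>auto intro: Wc_bm\<close>)
  finally show ?thesis .
qed

end


lemma frac_meas[measurable]: "(frac :: real \<Rightarrow> real) \<in> borel_measurable borel"
proof -
  have "(\<lambda>x::real. x - real_of_int \<lfloor>x\<rfloor>) \<in> borel_measurable borel" by measurable
  then show ?thesis unfolding frac_def[abs_def] .
qed

lemma frac_xt: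
  fixes x t :: real assumes "0 \<le> t" "t \<le> 1"
  shows "frac (x + t) = (if frac x + t < 1 then frac x + t else frac x + t - 1)"
proof -
  have f: "0 \<le> frac x" "frac x < 1" by (auto simp: frac_lt_1)
  have x: "x = of_int \<lfloor>x\<rfloor> + frac x" by (simp add: frac_def)
  show ?thesis
  proof (cases "frac x + t < 1")
    case True
    then have "\<lfloor>x + t\<rfloor> = \<lfloor>x\<rfloor>" using f assms by (subst x, subst floor_unique) auto
    then show ?thesis using True by (simp add: frac_def)
  next
    case False
    then have "\<lfloor>x + t\<rfloor> = \<lfloor>x\<rfloor> + 1" using f assms by (subst x, subst floor_unique) auto
    then show ?thesis using False by (simp add: frac_def)
  qed
qed

lemma avg_frac:
  fixes x d :: real assumes d: "0 \<le> d" "d \<le> 1"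
  shows "(\<integral>t. (if frac (x + t) \<le> d then 1 else 0) \<partial>uniform_measure lborel {0..1}) = d"
proof -
  define S where "S = {t::real. frac (x + t) \<le> d}"
  define f where "f = frac x"
  have f: "0 \<le> f" "f < 1" by (auto simp: f_def frac_lt_1)
  have Sm: "S \<in> sets borel" unfolding S_def by measurable
  have "(\<integral>t. (if frac (x + t) \<le> d then 1 else 0) \<partial>uniform_measure lborel {0..1}) = (\<integral>t. indicator S t \<partial>uniform_measure lborel {0..1})"
    by (intro Bochner_Integration.integral_cong) (auto simp: S_def indicator_def)
  also have "\<dots> = measure (uniform_measure lborel {0..1}) S"
    by simp
  also have "\<dots> = measure lborel ({0..1} \<inter> S)"
    using Sm by (simp add: measure_def emeasure_uniform_measure divide_ennreal_def)
  also have "\<dots> = d"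
  proof (cases "f \<le> d")
    case True
    have e: "{0..1} \<inter> S = {0..1} - {d-f<..<1-f}"
      using True f d by (auto simp: S_def frac_xt f_def[symmetric])
    have "measure lborel ({0..1} - {d-f<..<1-f}) = measure lborel {0..1::real} - measure lborel {d-f<..<1-f}"
      using True f d by (intro measure_Diff) auto
    then show ?thesis unfolding e using True f d by simp
  next
    case False
    have e: "{0..1} \<inter> S = {1-f..1-f+d}"
      using False f d unfolding f_def by (auto simp: S_def frac_xt split: if_splits)
    show ?thesis unfolding e using d by simp
  qed
  finally show ?thesis .
qed



lemma significand_eq:
  assumes B: "B > 1" and x: "x > 0"
  shows "significand B x = B powr frac (log B x)"
  unfolding significand_def
proof (rule the_equality)
  have f: "0 \<le> frac (log B x)" "frac (log B x) < 1" by (auto simp: frac_lt_1)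
  show "1 \<le> B powr frac (log B x) \<and> B powr frac (log B x) < B \<and> log B x - log B (B powr frac (log B x)) \<in> \<int>"
  proof (intro conjI)
    show "1 \<le> B powr frac (log B x)" using B f by (simp add: ge_one_powr_ge_zero)
    have "B powr frac (log B x) < B powr 1" using B f by (intro powr_less_mono) auto
    then show "B powr frac (log B x) < B" using B by simp
    have "log B x - log B (B powr frac (log B x)) = log B x - frac (log B x)" using B by simp
    then show "log B x - log B (B powr frac (log B x)) \<in> \<int>" using frac_unique_iff[of "log B x" "frac (log B x)"] by simp
  qed
next
  fix s assume s: "1 \<le> s \<and> s < B \<and> log B x - log B s \<in> \<int>"
  then have "0 \<le> log B s" "log B s < 1" using B by (auto simp: less_log_iff)
  then have "frac (log B x) = log B s" using s by (simp add: frac_unique_iff)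
  then show "s = B powr frac (log B x)" using s B by simp
qed

lemma significand_le:
  assumes B: "B > 1" and x: "x > 0" and D: "D > 0"
  shows "significand B x \<le> D \<longleftrightarrow> frac (log B x) \<le> log B D"
  using le_log_iff[OF B D] significand_eq[OF B x] by simp

lemma Vol1: "Vol m 1 bx = 2 ^ (m - 1) * (\<Sum>i<m. side_len bx i)"
proof -
  have "{I. I \<subseteq> {0..<m} \<and> card I = 1} = (\<lambda>i. {i}) ` {..<m}"
    by (auto simp: card_1_singleton_iff)
  then have "(\<Sum>I\<in>{I. I \<subseteq> {0..<m} \<and> card I = 1}. \<Prod>i\<in>I. side_len bx i) = (\<Sum>i<m. side_len bx i)"
    by (simp add: sum.reindex)
  then show ?thesis unfolding Vol_def by simp
qed



theorem corollary1p10: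
  fixes M :: "'a measure" and B a b :: real and m :: nat
    and B0 :: box and Bx :: "nat \<Rightarrow> 'a \<Rightarrow> box"
    and P :: "nat \<Rightarrow> nat \<Rightarrow> 'a \<Rightarrow> real"
  assumes "prob_space M"
    and "B > 1" and "a < b" and "b \<le> 0"
    and "m \<ge> 1" and "is_box m B0"
    and "\<And>i n. i < m \<Longrightarrow> n \<ge> 1 \<Longrightarrow> P i n \<in> borel_measurable M"
    and "\<And>i n \<omega>. i < m \<Longrightarrow> n \<ge> 1 \<Longrightarrow> \<omega> \<in> space M \<Longrightarrow> P i n \<omega> \<in> {0<..<1}"
    and "prob_space.indep_vars M (\<lambda>_. borel) (\<lambda>(i, n). P i n) ({0..<m} \<times> {1..})"
    and "\<And>i n. i < m \<Longrightarrow> n \<ge> 1 \<Longrightarrow>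
           distr M lborel (\<lambda>\<omega>. log B (P i n \<omega>)) = uniform_measure lborel {a<..<b}"
    and "\<And>\<omega>. \<omega> \<in> space M \<Longrightarrow> Bx 0 \<omega> = B0"
    and "\<And>n \<omega>. \<omega> \<in> space M \<Longrightarrow> is_box m (Bx n \<omega>)"
    and "\<And>n \<omega>. n \<ge> 1 \<Longrightarrow> \<omega> \<in> space M \<Longrightarrow> box_set m (Bx n \<omega>) \<subseteq> box_set m (Bx (n - 1) \<omega>)"
    and "\<And>n i \<omega>. n \<ge> 1 \<Longrightarrow> i < m \<Longrightarrow> \<omega> \<in> space M \<Longrightarrow>
           side_len (Bx n \<omega>) i = P i n \<omega> * side_len (Bx (n - 1) \<omega>) i"
  shows "strong_benford_conv M B (\<lambda>n \<omega>. Vol m 1 (Bx n \<omega>))"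
proof -
  note A = assms
  interpret pctx m a b M B P
  proof (rule pctx.intro)
    show "ctx a b" by (rule ctx.intro) (rule A(3))
    show "prob_space M" by (rule A(1))
    show "pctx_axioms m a b M B P"
    proof (rule pctx_axioms.intro)
      show "\<And>i n. i < m \<Longrightarrow> 1 \<le> n \<Longrightarrow> P i n \<in> borel_measurable M" by (rule A(7))
      show "prob_space.indep_vars M (\<lambda>_. borel) (\<lambda>(i, n). P i n) ({0..<m} \<times> {1..})" by (rule A(9))
      show "\<And>i n. i < m \<Longrightarrow> 1 \<le> n \<Longrightarrow> distr M lborel (\<lambda>\<omega>. log B (P i n \<omega>)) = uniform_measure lborel {a<..<b}"
        by (rule A(10))
    qed
  qed
  define L where "L i = side_len B0 i" for i
  have Lpos: "L i > 0" if "i < m" for i using A(6) that unfolding is_box_def L_def side_len_def by auto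
  have Ppos: "P i k \<omega> > 0" if "i < m" "k \<ge> 1" "\<omega> \<in> space M" for i k \<omega> using A(8)[OF that] by auto
  have side: "side_len (Bx n \<omega>) i = L i * (\<Prod>k\<in>{1..n}. P i k \<omega>)" if "\<omega> \<in> space M" "i < m" for n i \<omega>
  proof (induction n)
    case 0 then show ?case using A(11)[OF that(1)] by (simp add: L_def)
  next
    case (Suc n)
    have "side_len (Bx (Suc n) \<omega>) i = P i (Suc n) \<omega> * side_len (Bx n \<omega>) i"
      using A(14)[of "Suc n" i \<omega>] that by simp
    then show ?case using Suc by (simp add: atLeastAtMostSuc_conv ac_simps)
  qed
  have prodpow: "(\<Prod>k\<in>{1..n}. P i k \<omega>) = B powr (\<Sum>k\<in>{1..n}. X (i, k) \<omega>)" if "\<omega> \<in> space M" "i < m" for n i \<omega>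
  proof -
    have "B powr (\<Sum>k\<in>{1..n}. X (i, k) \<omega>) = (\<Prod>k\<in>{1..n}. B powr X (i, k) \<omega>)"
      using A(2) by (intro powr_sum) auto
    also have "\<dots> = (\<Prod>k\<in>{1..n}. P i k \<omega>)"
      using A(2) Ppos that by (intro prod.cong) (auto simp: X_def)
    finally show ?thesis by simp
  qed
  have vsum_eq: "vsum ({0..<m} \<times> {1..n}) \<omega> i = (\<Sum>k\<in>{1..n}. X (i, k) \<omega>)" if "i < m" for n i \<omega>
  proof -
    have "vsum ({0..<m} \<times> {1..n}) \<omega> i = (\<Sum>j\<in>{0..<m}. \<Sum>k\<in>{1..n}. if j = i then X (j, k) \<omega> else 0)"
      unfolding vsum_def by (auto simp: sum.cartesian_product case_prod_beta intro!: sum.cong)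
    also have "\<dots> = (\<Sum>j\<in>{0..<m}. if j = i then (\<Sum>k\<in>{1..n}. X (j, k) \<omega>) else 0)"
      by (intro sum.cong) auto
    also have "\<dots> = (\<Sum>k\<in>{1..n}. X (i, k) \<omega>)" using that by simp
    finally show ?thesis .
  qed
  define G where "G s = log B (2^(m-1) * (\<Sum>i<m. L i * B powr s i))" for s :: "nat \<Rightarrow> real"
  have Spos: "0 < 2^(m-1) * (\<Sum>i<m. L i * B powr s i)" for s :: "nat \<Rightarrow> real"
  proof -
    have "0 < (\<Sum>i<m. L i * B powr s i)" using A(5) A(2) Lpos by (intro sum_pos) (auto simp: lessThan_empty_iff)
    then show ?thesis by simp
  qed
  have VolG: "Vol m 1 (Bx n \<omega>) = 2^(m-1) * (\<Sum>i<m. L i * B powr vsum ({0..<m} \<times> {1..n}) \<omega> i)"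
    if "\<omega> \<in> space M" for n \<omega>
  proof -
    have pv: "side_len (Bx n \<omega>) i = L i * B powr vsum ({0..<m} \<times> {1..n}) \<omega> i" if "i < m" for i
      using side[OF \<open>\<omega> \<in> space M\<close> that] prodpow[OF \<open>\<omega> \<in> space M\<close> that] vsum_eq[OF that] by simp
    show ?thesis unfolding Vol1 using pv by simp
  qed
  have Gsh: "G (sh t s) = G s + t" for t s
  proof -
    have "2^(m-1) * (\<Sum>i<m. L i * B powr sh t s i) = B powr t * (2^(m-1) * (\<Sum>i<m. L i * B powr s i))"
      by (simp add: sh_def sum_distrib_left powr_add ac_simps)
    moreover have "0 < (\<Sum>i<m. L i * B powr s i)" using Spos[of s] by (simp add: zero_less_mult_iff)
    ultimately show ?thesis unfolding G_def using A(2) by (simp add: log_mult)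
  qed
  have Gm[measurable]: "G \<in> borel_measurable SV" unfolding G_def by measurable
  show ?thesis
    unfolding strong_benford_conv_def
  proof
    fix D assume D: "D \<in> {1..B}"
    define d where "d = log B D"
    have d: "0 \<le> d" "d \<le> 1" using D A(2) by (auto simp: d_def)
    define h where "h s = (if frac (G s) \<le> d then 1 else 0 :: real)" for s
    have hbm: "bm h" unfolding bm_def h_def by (auto intro!: exI[of _ 1])
    have havg: "avg h d" unfolding avg_def h_def Gsh using avg_frac[OF d] by simp
    have hb: "0 \<le> h s \<and> h s \<le> 1" for s unfolding h_def by auto
    obtain k0 where k0: "2 \<le> Ll k0"
    proof
      define k0 where "k0 = nat \<lceil>4 / (b - a)\<rceil>"
      have "4 / (b - a) \<le> real k0" unfolding k0_def by linarith
      then have "4 \<le> real k0 * (b - a)" using A(3) by (simp add: field_simps)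
      then show "2 \<le> Ll k0" unfolding Ll_def using A(3) by (simp add: field_simps)
    qed
    define q where "q = qq k0"
    have q: "0 < q" "q \<le> 1"
    proof -
      have "0 < Ll k0" using k0 by simp
      then show "0 < q" unfolding q_def qq_def by simp
      have "(1/4::real)^k0 \<le> 1" by (simp add: power_le_one)
      then have "((1/4::real)^k0)^m \<le> 1" by (simp add: power_le_one)
      moreover have "(1 / Ll k0)^m \<le> 1" using k0 by (intro power_le_one) auto
      ultimately show "q \<le> 1" unfolding q_def qq_def using k0 by (intro mult_le_one) auto
    qed
    define K where "K = Suc k0"
    have prob_eq: "measure M {\<omega> \<in> space M. significand B (Vol m 1 (Bx n \<omega>)) \<le> D} =
        (Wc K m ^^ (n div K)) (Wc (n mod K) m h) (\<lambda>_. 0)" for n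
    proof -
      have "measure M {\<omega> \<in> space M. significand B (Vol m 1 (Bx n \<omega>)) \<le> D} =
          (\<integral>\<omega>. indicator {\<omega> \<in> space M. significand B (Vol m 1 (Bx n \<omega>)) \<le> D} \<omega> \<partial>M)"
        by (simp add: Int_absorb2)
      also have "\<dots> = (\<integral>\<omega>. h (vsum ({0..<m} \<times> {1..n}) \<omega>) \<partial>M)"
      proof (intro Bochner_Integration.integral_cong refl)
        fix \<omega> assume \<omega>: "\<omega> \<in> space M"
        have "Vol m 1 (Bx n \<omega>) > 0" "log B (Vol m 1 (Bx n \<omega>)) = G (vsum ({0..<m} \<times> {1..n}) \<omega>)"
          using VolG[OF \<omega>] Spos unfolding G_def by auto
        moreover have "D > 0" using D by simp
        ultimately show "indicator {\<omega> \<in> space M. significand B (Vol m 1 (Bx n \<omega>)) \<le> D} \<omega> = h (vsum ({0..<m} \<times> {1..n}) \<omega>)"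
          using \<omega> A(2) by (simp add: h_def d_def significand_le indicator_def)
      qed
      also have "\<dots> = (Wc K m ^^ (n div K)) (Wc (n mod K) m h) (\<lambda>_. 0)"
        by (rule link_full[OF hbm]) (simp add: K_def)
      finally show ?thesis .
    qed
    have bound: "\<bar>measure M {\<omega> \<in> space M. significand B (Vol m 1 (Bx n \<omega>)) \<le> D} - d\<bar> \<le> (1 - q)^(n div K)" for n
    proof -
      have "d - (1 - q)^(n div K) * (d - 0) \<le> (Wc K m ^^ (n div K)) (Wc (n mod K) m h) (\<lambda>_. 0) \<and>
          (Wc K m ^^ (n div K)) (Wc (n mod K) m h) (\<lambda>_. 0) \<le> d + (1 - q)^(n div K) * (1 - d)"
        unfolding K_def q_def
        by (rule iterate[OF k0 Wc_bm[OF hbm] Wc_avg[OF hbm havg] Wc_bounds[OF hbm hb]])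
      moreover have "(1 - q)^(n div K) * d \<le> (1 - q)^(n div K)" "(1 - q)^(n div K) * (1 - d) \<le> (1 - q)^(n div K)"
        using d q by (auto intro!: mult_left_le)
      ultimately show ?thesis unfolding prob_eq by (auto simp: abs_le_iff)
    qed
    show "(\<lambda>n. measure M {\<omega> \<in> space M. significand B (Vol m 1 (Bx n \<omega>)) \<le> D}) \<longlonglongrightarrow> log B D"
      unfolding d_def[symmetric]
    proof (rule LIMSEQ_I)
      fix r :: real assume r: "0 < r"
      have "(\<lambda>j. (1 - q)^j) \<longlonglongrightarrow> 0" using q by (intro LIMSEQ_power_zero) auto
      then have "eventually (\<lambda>j. (1 - q)^j < r) sequentially" using r by (rule order_tendstoD)
      then obtain J where J: "\<And>j. j \<ge> J \<Longrightarrow> (1 - q)^j < r" by (auto simp: eventually_sequentially)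
      show "\<exists>no. \<forall>n\<ge>no. norm (measure M {\<omega> \<in> space M. significand B (Vol m 1 (Bx n \<omega>)) \<le> D} - d) < r"
      proof (intro exI allI impI)
        fix n assume n: "J * K \<le> n"
        have "J * K div K = J" unfolding K_def by (rule nonzero_mult_div_cancel_right) simp
        then have "J \<le> n div K" using div_le_mono[OF n, of K] by simp
        then show "norm (measure M {\<omega> \<in> space M. significand B (Vol m 1 (Bx n \<omega>)) \<le> D} - d) < r"
          using bound[of n] J[of "n div K"] by simp
      qed
    qed
  qed
qed


end
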